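(* Under the standing setup, fix a neighborhood $n$ with $p_n>0$ and $X_n\in(0,1)$, and let $\delta_{B,n}=\mathrm{Cov}(Y,X\mid N=n)$. (i) If $\delta_{B,n}\ge0$, then $D_n\in[0,D^+_{MOB,n}]$, $Y^1_n\in[Y_n,Y^{1+}_{MOB,n}]$ and $Y^0_n\in[Y^{0-}_{MOB,n},Y_n]$. (ii) If $\delta_{B,n}\le0$, then $D_n\in[D^-_{MOB,n},0]$, $Y^1_n\in[Y^{1-}_{MOB,n},Y_n]$ and $Y^0_n\in[Y_n,Y^{0+}_{MOB,n}]$. (iii) Each of these bounds is sharp under the respective sign assumption (absent additional information).
   Context: Let $(X,Y,N)$ be a random triple with $X\in\{0,1\}$, $Y$ real-valued, $N$ taking values in a finite set $\mathcal N$. Write $p_n=\Pr(N=n)$, $X_n=\mathbb E[X\mid N=n]$, $Y_n=\mathbb E[Y\mid N=n]$. Fix reals $\underline Y\le\overline Y$ and assume $\mathbb E[Y\mid X=x,N=n]\in[\underline Y,\overline Y]$ whenever $\Pr(X=x,N=n)>0$. Neighborhood group means $Y^x_n=\mathbb E[Y\mid X=x,N=n]$ and $D_n=Y^1_n-Y^0_n$. Neighborhood method-of-bounds quantities: $Y^{1+}_{MOB,n}=\min\{(Y_n-\underline Y(1-X_n))/X_n,\overline Y\}$, $Y^{0-}_{MOB,n}=\max\{(Y_n-\overline Y X_n)/(1-X_n),\underline Y\}$, $Y^{1-}_{MOB,n}=\max\{(Y_n-\overline Y(1-X_n))/X_n,\underline Y\}$, $Y^{0+}_{MOB,n}=\min\{(Y_n-\underline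 Y X_n)/(1-X_n),\overline Y\}$, $D^+_{MOB,n}=Y^{1+}_{MOB,n}-Y^{0-}_{MOB,n}$, $D^-_{MOB,n}=Y^{1-}_{MOB,n}-Y^{0+}_{MOB,n}$. Sharpness under an assumption $\mathcal A$: the parameter lies in the interval for every joint distribution satisfying the standing assumptions and $\mathcal A$, and every value in the interval is attained by some joint distribution of $(X,Y,N)$ with the same observed $(p_m,X_m,Y_m)_{m\in\mathcal N}$, satisfying the standing bound and $\mathcal A$. *)

theory Defs
  imports "HOL-Probability.Probability"
begin

text \<open>A joint distribution of (X,Y,N) is represented by a probability space M with
random variables X :: 'a \<Rightarrow> bool (X = 1 iff True), Y :: 'a \<Rightarrow> real, N :: 'a \<Rightarrow> 'n.\<close>

definition evt :: "'a measure \<Rightarrow> ('a \<Rightarrow> bool) \<Rightarrow> 'a set" where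
  "evt M P = {\<omega> \<in> space M. P \<omega>}"

definition cmean :: "'a measure \<Rightarrow> ('a \<Rightarrow> real) \<Rightarrow> 'a set \<Rightarrow> real" where
  "cmean M f B = (\<integral>\<omega>. indicator B \<omega> * f \<omega> \<partial>M) / measure M B"

definition nbhd_prob :: "'a measure \<Rightarrow> ('a \<Rightarrow> 'n) \<Rightarrow> 'n \<Rightarrow> real" where
  "nbhd_prob M N n = measure M (evt M (\<lambda>\<omega>. N \<omega> = n))"

definition nbhd_X :: "'a measure \<Rightarrow> ('a \<Rightarrow> bool) \<Rightarrow> ('a \<Rightarrow> 'n) \<Rightarrow> 'n \<Rightarrow> real" where
  "nbhd_X M X N n = cmean M (\<lambda>\<omega>. of_bool (X \<omega>)) (evt M (\<lambda>\<omega>. N \<omega> = n))"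

definition nbhd_Y :: "'a measure \<Rightarrow> ('a \<Rightarrow> real) \<Rightarrow> ('a \<Rightarrow> 'n) \<Rightarrow> 'n \<Rightarrow> real" where
  "nbhd_Y M Y N n = cmean M Y (evt M (\<lambda>\<omega>. N \<omega> = n))"

text \<open>Group mean Y^x_n = E[Y | X = x, N = n] (x = True means X = 1).\<close>
definition grp_Y :: "'a measure \<Rightarrow> ('a \<Rightarrow> bool) \<Rightarrow> ('a \<Rightarrow> real) \<Rightarrow> ('a \<Rightarrow> 'n) \<Rightarrow> bool \<Rightarrow> 'n \<Rightarrow> real" where
  "grp_Y M X Y N x n = cmean M Y (evt M (\<lambda>\<omega>. X \<omega> = x \<and> N \<omega> = n))"

definition grp_prob :: "'a measure \<Rightarrow> ('a \<Rightarrow> bool) \<Rightarrow> ('a \<Rightarrow> 'n) \<Rightarrow> bool \<Rightarrow> 'n \<Rightarrow> real" where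
  "grp_prob M X N x n = measure M (evt M (\<lambda>\<omega>. X \<omega> = x \<and> N \<omega> = n))"

definition nbhd_D :: "'a measure \<Rightarrow> ('a \<Rightarrow> bool) \<Rightarrow> ('a \<Rightarrow> real) \<Rightarrow> ('a \<Rightarrow> 'n) \<Rightarrow> 'n \<Rightarrow> real" where
  "nbhd_D M X Y N n = grp_Y M X Y N True n - grp_Y M X Y N False n"

definition nbhd_cov :: "'a measure \<Rightarrow> ('a \<Rightarrow> bool) \<Rightarrow> ('a \<Rightarrow> real) \<Rightarrow> ('a \<Rightarrow> 'n) \<Rightarrow> 'n \<Rightarrow> real" where
  "nbhd_cov M X Y N n =
     cmean M (\<lambda>\<omega>. Y \<omega> * of_bool (X \<omega>)) (evt M (\<lambda>\<omega>. N \<omega> = n))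
     - nbhd_Y M Y N n * nbhd_X M X N n"

definition standing :: "'a measure \<Rightarrow> ('a \<Rightarrow> bool) \<Rightarrow> ('a \<Rightarrow> real) \<Rightarrow> ('a \<Rightarrow> 'n) \<Rightarrow> real \<Rightarrow> real \<Rightarrow> bool" where
  "standing M X Y N lo hi \<longleftrightarrow>
     prob_space M \<and> X \<in> M \<rightarrow>\<^sub>M count_space UNIV \<and> N \<in> M \<rightarrow>\<^sub>M count_space UNIV \<and>
     integrable M Y \<and> lo \<le> hi \<and>
     (\<forall>x m. grp_prob M X N x m > 0 \<longrightarrow> lo \<le> grp_Y M X Y N x m \<and> grp_Y M X Y N x m \<le> hi)"

definition Y1plus_MOB :: "real \<Rightarrow> real \<Rightarrow> real \<Rightarrow> real \<Rightarrow> real" where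
  "Y1plus_MOB lo hi xn yn = min ((yn - lo * (1 - xn)) / xn) hi"
definition Y0minus_MOB :: "real \<Rightarrow> real \<Rightarrow> real \<Rightarrow> real \<Rightarrow> real" where
  "Y0minus_MOB lo hi xn yn = max ((yn - hi * xn) / (1 - xn)) lo"
definition Y1minus_MOB :: "real \<Rightarrow> real \<Rightarrow> real \<Rightarrow> real \<Rightarrow> real" where
  "Y1minus_MOB lo hi xn yn = max ((yn - hi * (1 - xn)) / xn) lo"
definition Y0plus_MOB :: "real \<Rightarrow> real \<Rightarrow> real \<Rightarrow> real \<Rightarrow> real" where
  "Y0plus_MOB lo hi xn yn = min ((yn - lo * xn) / (1 - xn)) hi"
definition Dplus_MOB :: "real \<Rightarrow> real \<Rightarrow> real \<Rightarrow> real \<Rightarrow> real" where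
  "Dplus_MOB lo hi xn yn = Y1plus_MOB lo hi xn yn - Y0minus_MOB lo hi xn yn"
definition Dminus_MOB :: "real \<Rightarrow> real \<Rightarrow> real \<Rightarrow> real \<Rightarrow> real" where
  "Dminus_MOB lo hi xn yn = Y1minus_MOB lo hi xn yn - Y0plus_MOB lo hi xn yn"

text \<open>Alternative joint distributions (witnesses for sharpness) are distributions of
(X,Y,N) on bool \<times> real \<times> 'n, given as pmfs, with the coordinate projections.\<close>
abbreviation pX :: "bool \<times> real \<times> 'n \<Rightarrow> bool" where "pX \<equiv> fst"
abbreviation pY :: "bool \<times> real \<times> 'n \<Rightarrow> real" where "pY \<equiv> (\<lambda>\<omega>. fst (snd \<omega>))"
abbreviation pN :: "bool \<times> real \<times> 'n \<Rightarrow> 'n" where "pN \<equiv> (\<lambda>\<omega>. snd (snd \<omega>))"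

definition same_observed :: "(bool \<times> real \<times> 'n) pmf \<Rightarrow> 'a measure \<Rightarrow> ('a \<Rightarrow> bool) \<Rightarrow> ('a \<Rightarrow> real) \<Rightarrow> ('a \<Rightarrow> 'n) \<Rightarrow> bool" where
  "same_observed q M X Y N \<longleftrightarrow>
     (\<forall>m. nbhd_prob (measure_pmf q) pN m = nbhd_prob M N m \<and>
          nbhd_X (measure_pmf q) pX pN m = nbhd_X M X N m \<and>
          nbhd_Y (measure_pmf q) pY pN m = nbhd_Y M Y N m)"

end

theory Submission
  imports Defs
begin


lemma evt_sets:
  assumes [measurable]: "X \<in> M \<rightarrow>\<^sub>M count_space UNIV" "N \<in> M \<rightarrow>\<^sub>M count_space UNIV"
  shows "evt M (\<lambda>\<omega>. N \<omega> = m) \<in> sets M" "evt M (\<lambda>\<omega>. X \<omega> = x \<and> N \<omega> = m) \<in> sets M"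
  unfolding evt_def by measurable

lemma Mfacts:
  fixes M :: "'a measure" and X :: "'a \<Rightarrow> bool" and Y :: "'a \<Rightarrow> real" and N :: "'a \<Rightarrow> 'n::finite" and m :: 'n and x :: bool
  assumes st: "standing M X Y N lo hi"
  defines "E \<equiv> evt M (\<lambda>\<omega>. N \<omega> = m)" and "G \<equiv> \<lambda>x. evt M (\<lambda>\<omega>. X \<omega> = x \<and> N \<omega> = m)"
  shows "measure M E = measure M (G True) + measure M (G False)"
    and "(\<integral>\<omega>. indicator E \<omega> * of_bool (X \<omega>) \<partial>M) = measure M (G True)"
    and "(\<integral>\<omega>. indicator E \<omega> * Y \<omega> \<partial>M) = (\<integral>\<omega>. indicator (G True) \<omega> * Y \<omega> \<partial>M) + (\<integral>\<omega>. indicator (G False) \<omega> * Y \<omega> \<partial>M)"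
    and "(\<integral>\<omega>. indicator E \<omega> * (Y \<omega> * of_bool (X \<omega>)) \<partial>M) = (\<integral>\<omega>. indicator (G True) \<omega> * Y \<omega> \<partial>M)"
    and "(\<integral>\<omega>. indicator (G x) \<omega> * Y \<omega> \<partial>M) = measure M (G x) * grp_Y M X Y N x m"
proof -
  have ps: "prob_space M" and mX: "X \<in> M \<rightarrow>\<^sub>M count_space UNIV" and mN: "N \<in> M \<rightarrow>\<^sub>M count_space UNIV"
    and iY: "integrable M Y" using st unfolding standing_def by auto
  interpret prob_space M by (fact ps)
  have sE: "E \<in> sets M" and sG: "\<And>x. G x \<in> sets M"
    unfolding E_def G_def using evt_sets[OF mX mN] by auto
  have un: "E = G True \<union> G False" and dj: "G True \<inter> G False = {}"
    unfolding E_def G_def evt_def by auto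
  show "measure M E = measure M (G True) + measure M (G False)"
    unfolding un by (rule finite_measure_Union[OF sG sG dj])
  have "(\<lambda>\<omega>. indicator E \<omega> * of_bool (X \<omega>)) = (indicator (G True) :: 'a \<Rightarrow> real)"
    unfolding E_def G_def evt_def by (auto simp: indicator_def fun_eq_iff)
  then show "(\<integral>\<omega>. indicator E \<omega> * of_bool (X \<omega>) \<partial>M) = measure M (G True)"
    using sG by simp
  have iG: "\<And>x. integrable M (\<lambda>\<omega>. indicator (G x) \<omega> * Y \<omega>)"
    using integrable_real_mult_indicator[OF sG iY] by (simp add: mult.commute)
  have "(\<lambda>\<omega>. indicator E \<omega> * Y \<omega>) = (\<lambda>\<omega>. indicator (G True) \<omega> * Y \<omega> + indicator (G False) \<omega> * Y \<omega>)"
    unfolding E_def G_def evt_def by (auto simp: indicator_def fun_eq_iff)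
  then show "(\<integral>\<omega>. indicator E \<omega> * Y \<omega> \<partial>M) = (\<integral>\<omega>. indicator (G True) \<omega> * Y \<omega> \<partial>M) + (\<integral>\<omega>. indicator (G False) \<omega> * Y \<omega> \<partial>M)"
    using iG by simp
  have "(\<lambda>\<omega>. indicator E \<omega> * (Y \<omega> * of_bool (X \<omega>))) = (\<lambda>\<omega>. indicator (G True) \<omega> * Y \<omega>)"
    unfolding E_def G_def evt_def by (auto simp: indicator_def fun_eq_iff)
  then show "(\<integral>\<omega>. indicator E \<omega> * (Y \<omega> * of_bool (X \<omega>)) \<partial>M) = (\<integral>\<omega>. indicator (G True) \<omega> * Y \<omega> \<partial>M)"
    by simp
  show "(\<integral>\<omega>. indicator (G x) \<omega> * Y \<omega> \<partial>M) = measure M (G x) * grp_Y M X Y N x m"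
  proof (cases "measure M (G x) = 0")
    case True
    then have "G x \<in> null_sets M" using sG by (intro null_setsI) (simp_all add: emeasure_eq_measure)
    then have "AE \<omega> in M. \<omega> \<notin> G x" by (rule AE_not_in)
    then have "AE \<omega> in M. indicator (G x) \<omega> * Y \<omega> = 0" by eventually_elim simp
    then show ?thesis using True by (simp add: integral_eq_zero_AE)
  next
    case False
    then show ?thesis unfolding grp_Y_def cmean_def G_def by simp
  qed
qed
lemma sumUNIV:
  fixes f :: "bool \<times> 'n::finite \<Rightarrow> 'b::comm_monoid_add"
  shows "(\<Sum>a\<in>UNIV. f a) = (\<Sum>m\<in>UNIV. f (True, m)) + (\<Sum>m\<in>UNIV. f (False, m))"
proof -
  have "(\<Sum>a\<in>UNIV. f a) = (\<Sum>x\<in>UNIV. \<Sum>m\<in>UNIV. f (x, m))"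
    by (simp add: sum.cartesian_product UNIV_Times_UNIV[symmetric] del: UNIV_Times_UNIV)
  also have "\<dots> = (\<Sum>m\<in>UNIV. f (True, m)) + (\<Sum>m\<in>UNIV. f (False, m))"
    by (simp add: UNIV_bool add.commute)
  finally show ?thesis .
qed

lemma Msum:
  fixes M :: "'a measure" and X :: "'a \<Rightarrow> bool" and Y :: "'a \<Rightarrow> real" and N :: "'a \<Rightarrow> 'n::finite"
  assumes st: "standing M X Y N lo hi"
  shows "(\<Sum>a\<in>UNIV. grp_prob M X N (fst a) (snd a)) = 1"
proof -
  have ps: "prob_space M" and mX: "X \<in> M \<rightarrow>\<^sub>M count_space UNIV" and mN: "N \<in> M \<rightarrow>\<^sub>M count_space UNIV"
    using st unfolding standing_def by auto
  interpret prob_space M by (fact ps)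
  let ?A = "\<lambda>a. evt M (\<lambda>\<omega>. X \<omega> = fst a \<and> N \<omega> = snd a)"
  have "measure M (\<Union>a\<in>UNIV. ?A a) = (\<Sum>a\<in>UNIV. measure M (?A a))"
    by (rule finite_measure_finite_Union) (auto simp: disjoint_family_on_def intro: evt_sets[OF mX mN], auto simp: evt_def)
  moreover have "(\<Union>a\<in>UNIV. ?A a) = space M" unfolding evt_def by auto
  ultimately show ?thesis unfolding grp_prob_def by (simp add: prob_space)
qed

lemma sum_ofbool_delta[simp]:
  fixes f :: "'n::finite \<Rightarrow> real"
  shows "(\<Sum>k\<in>UNIV. of_bool (k = m) * f k) = f m"
proof -
  have "(\<Sum>k\<in>UNIV. of_bool (k = m) * f k) = (\<Sum>k\<in>UNIV. if k = m then f k else 0)"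
    by (rule sum.cong) auto
  then show ?thesis by simp
qed

lemma construct:
  fixes M :: "'a measure" and X :: "'a \<Rightarrow> bool" and Y :: "'a \<Rightarrow> real" and N :: "'a \<Rightarrow> 'n::finite"
    and val :: "bool \<Rightarrow> 'n \<Rightarrow> real"
  assumes st: "standing M X Y N lo hi"
    and vb: "\<And>x m. grp_prob M X N x m > 0 \<Longrightarrow> lo \<le> val x m \<and> val x m \<le> hi"
    and vs: "\<And>m. grp_prob M X N True m * val True m + grp_prob M X N False m * val False m
               = (\<integral>\<omega>. indicator (evt M (\<lambda>\<omega>. N \<omega> = m)) \<omega> * Y \<omega> \<partial>M)"
  shows "\<exists>q. standing (measure_pmf q) pX pY pN lo hi \<and> same_observed q M X Y N
     \<and> (\<forall>x m. grp_prob M X N x m > 0 \<longrightarrow> grp_Y (measure_pmf q) pX pY pN x m = val x m)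
     \<and> (\<forall>m. cmean (measure_pmf q) (\<lambda>\<omega>. pY \<omega> * of_bool (pX \<omega>)) (evt (measure_pmf q) (\<lambda>\<omega>. pN \<omega> = m))
            = grp_prob M X N True m * val True m / nbhd_prob M N m)"
proof -
  define w where "w = (\<lambda>a::bool \<times> 'n. grp_prob M X N (fst a) (snd a))"
  have ps: "prob_space M" and mX: "X \<in> M \<rightarrow>\<^sub>M count_space UNIV" and mN: "N \<in> M \<rightarrow>\<^sub>M count_space UNIV"
    and iY: "integrable M Y" and lh: "lo \<le> hi" using st unfolding standing_def by auto
  interpret prob_space M by (fact ps)
  have wnn: "\<And>a. 0 \<le> w a" unfolding w_def grp_prob_def by simp
  have w1: "(\<integral>\<^sup>+a. ennreal (w a) \<partial>count_space UNIV) = 1"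
    using Msum[OF st] wnn by (simp add: nn_integral_count_space_finite w_def)
  define r where "r = embed_pmf w"
  have pr: "\<And>a. pmf r a = w a" unfolding r_def using pmf_embed_pmf[OF wnn w1] .
  define g where "g = (\<lambda>a::bool \<times> 'n. (fst a, val (fst a) (snd a), snd a))"
  define q where "q = map_pmf g r"
  have key: "\<And>F::bool \<times> real \<times> 'n \<Rightarrow> real. (\<integral>\<omega>. F \<omega> \<partial>measure_pmf q) = (\<Sum>a\<in>UNIV. F (g a) * w a)"
    unfolding q_def by (simp add: integral_measure_pmf_real[where A=UNIV] pr)
  have meas: "\<And>S. measure (measure_pmf q) S = (\<integral>\<omega>. indicator S \<omega> \<partial>measure_pmf q)"
    by simp
  have q1: "grp_prob (measure_pmf q) pX pN x m = w (x, m)" for x m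
    unfolding grp_prob_def evt_def meas key by (cases x) (simp_all add: sumUNIV g_def indicator_def mult.assoc)
  have q2: "nbhd_prob (measure_pmf q) pN m = w (True, m) + w (False, m)" for m
    unfolding nbhd_prob_def evt_def meas key by (simp add: sumUNIV g_def indicator_def mult.assoc)
  have q3: "(\<integral>\<omega>. indicator (evt (measure_pmf q) (\<lambda>\<omega>. pN \<omega> = m)) \<omega> * of_bool (pX \<omega>) \<partial>measure_pmf q) = w (True, m)" for m
    unfolding evt_def key by (simp add: sumUNIV g_def indicator_def mult.assoc)
  have q4: "(\<integral>\<omega>. indicator (evt (measure_pmf q) (\<lambda>\<omega>. pN \<omega> = m)) \<omega> * pY \<omega> \<partial>measure_pmf q)
      = w (True, m) * val True m + w (False, m) * val False m" for m
    unfolding evt_def key by (simp add: sumUNIV g_def indicator_def mult.assoc)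
  have q5: "(\<integral>\<omega>. indicator (evt (measure_pmf q) (\<lambda>\<omega>. pX \<omega> = x \<and> pN \<omega> = m)) \<omega> * pY \<omega> \<partial>measure_pmf q)
      = w (x, m) * val x m" for x m
    unfolding evt_def key by (cases x) (simp_all add: sumUNIV g_def indicator_def mult.assoc)
  have q6: "(\<integral>\<omega>. indicator (evt (measure_pmf q) (\<lambda>\<omega>. pN \<omega> = m)) \<omega> * (pY \<omega> * of_bool (pX \<omega>)) \<partial>measure_pmf q)
      = w (True, m) * val True m" for m
    unfolding evt_def key by (simp add: sumUNIV g_def indicator_def mult.assoc)
  have MP: "nbhd_prob M N m = w (True, m) + w (False, m)" for m
    using Mfacts(1)[OF st, of m] unfolding nbhd_prob_def w_def grp_prob_def by simp
  have MX: "nbhd_X M X N m = w (True, m) / nbhd_prob M N m" for m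
    using Mfacts(2)[OF st, of m] unfolding nbhd_X_def cmean_def nbhd_prob_def w_def grp_prob_def by simp
  have MY: "nbhd_Y M Y N m = (w (True, m) * val True m + w (False, m) * val False m) / nbhd_prob M N m" for m
    using vs[of m] unfolding nbhd_Y_def cmean_def nbhd_prob_def w_def grp_prob_def by simp
  have fin: "finite (set_pmf q)" unfolding q_def by simp
  have gq: "grp_Y (measure_pmf q) pX pY pN x m = val x m" if "grp_prob M X N x m > 0" for x m
    using q5[of x m] q1[of x m] that unfolding grp_Y_def cmean_def w_def grp_prob_def by simp
  have "standing (measure_pmf q) pX pY pN lo hi"
    unfolding standing_def
  proof (intro conjI allI impI)
    show "prob_space (measure_pmf q)" by (rule measure_pmf.prob_space_axioms)
    show "integrable (measure_pmf q) pY" using fin by (rule integrable_measure_pmf_finite)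
    show "lo \<le> hi" by (fact lh)
    fix x m assume "0 < grp_prob (measure_pmf q) pX pN x m"
    then have "0 < grp_prob M X N x m" using q1 unfolding w_def by simp
    then show "lo \<le> grp_Y (measure_pmf q) pX pY pN x m" "grp_Y (measure_pmf q) pX pY pN x m \<le> hi"
      using gq vb by auto
  qed auto
  moreover have "same_observed q M X Y N"
    unfolding same_observed_def
  proof (intro allI conjI)
    fix m
    show "nbhd_prob (measure_pmf q) pN m = nbhd_prob M N m" using q2 MP by simp
    show "nbhd_X (measure_pmf q) pX pN m = nbhd_X M X N m"
    proof -
      have "nbhd_X (measure_pmf q) pX pN m = w (True, m) / nbhd_prob (measure_pmf q) pN m"
        unfolding nbhd_X_def cmean_def q3 nbhd_prob_def ..
      then show ?thesis using MX q2 MP by simp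
    qed
    show "nbhd_Y (measure_pmf q) pY pN m = nbhd_Y M Y N m"
    proof -
      have "nbhd_Y (measure_pmf q) pY pN m = (w (True, m) * val True m + w (False, m) * val False m) / nbhd_prob (measure_pmf q) pN m"
        unfolding nbhd_Y_def cmean_def q4 nbhd_prob_def ..
      then show ?thesis using MY q2 MP by simp
    qed
  qed
  moreover have "cmean (measure_pmf q) (\<lambda>\<omega>. pY \<omega> * of_bool (pX \<omega>)) (evt (measure_pmf q) (\<lambda>\<omega>. pN \<omega> = m))
            = grp_prob M X N True m * val True m / nbhd_prob M N m" for m
    unfolding cmean_def q6 using q2[of m] MP[of m] unfolding nbhd_prob_def w_def by simp
  ultimately show ?thesis using gq by blast
qed

lemma decomp:
  fixes M :: "'a measure" and X :: "'a \<Rightarrow> bool" and Y :: "'a \<Rightarrow> real" and N :: "'a \<Rightarrow> 'n::finite"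
  assumes st: "standing M X Y N lo hi"
    and pn: "nbhd_prob M N n > 0"
    and xn: "0 < nbhd_X M X N n" "nbhd_X M X N n < 1"
  shows "grp_prob M X N True n = nbhd_X M X N n * nbhd_prob M N n"
    and "grp_prob M X N False n = (1 - nbhd_X M X N n) * nbhd_prob M N n"
    and "lo \<le> grp_Y M X Y N True n" "grp_Y M X Y N True n \<le> hi"
    and "lo \<le> grp_Y M X Y N False n" "grp_Y M X Y N False n \<le> hi"
    and "nbhd_Y M Y N n = nbhd_X M X N n * grp_Y M X Y N True n + (1 - nbhd_X M X N n) * grp_Y M X Y N False n"
    and "nbhd_cov M X Y N n = nbhd_X M X N n * (grp_Y M X Y N True n - nbhd_Y M Y N n)"
    and "(\<integral>\<omega>. indicator (evt M (\<lambda>\<omega>. N \<omega> = n)) \<omega> * Y \<omega> \<partial>M) = nbhd_prob M N n * nbhd_Y M Y N n"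
proof -
  note F = Mfacts[OF st, where m=n]
  let ?p = "nbhd_prob M N n"
  show g1: "grp_prob M X N True n = nbhd_X M X N n * ?p"
    using F(2) pn unfolding grp_prob_def nbhd_X_def cmean_def nbhd_prob_def by simp
  show g0: "grp_prob M X N False n = (1 - nbhd_X M X N n) * ?p"
    using F(1) g1 unfolding grp_prob_def nbhd_prob_def by (simp add: algebra_simps)
  have p1: "grp_prob M X N True n > 0" using g1 pn xn by simp
  have p0: "grp_prob M X N False n > 0" using g0 pn xn by simp
  show "lo \<le> grp_Y M X Y N True n" "grp_Y M X Y N True n \<le> hi"
    "lo \<le> grp_Y M X Y N False n" "grp_Y M X Y N False n \<le> hi"
    using st p1 p0 unfolding standing_def by auto
  show I: "(\<integral>\<omega>. indicator (evt M (\<lambda>\<omega>. N \<omega> = n)) \<omega> * Y \<omega> \<partial>M) = ?p * nbhd_Y M Y N n"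
    using pn unfolding nbhd_Y_def cmean_def nbhd_prob_def by simp
  have "?p * nbhd_Y M Y N n = ?p * (nbhd_X M X N n * grp_Y M X Y N True n + (1 - nbhd_X M X N n) * grp_Y M X Y N False n)"
  proof -
    have "?p * nbhd_Y M Y N n = grp_prob M X N True n * grp_Y M X Y N True n + grp_prob M X N False n * grp_Y M X Y N False n"
      using I F(3) Mfacts(5)[OF st, where m=n and x=True] Mfacts(5)[OF st, where m=n and x=False]
      unfolding grp_prob_def by simp
    also have "\<dots> = ?p * (nbhd_X M X N n * grp_Y M X Y N True n + (1 - nbhd_X M X N n) * grp_Y M X Y N False n)"
      unfolding g1 g0 by (simp add: algebra_simps)
    finally show ?thesis .
  qed
  then show "nbhd_Y M Y N n = nbhd_X M X N n * grp_Y M X Y N True n + (1 - nbhd_X M X N n) * grp_Y M X Y N False n"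
    using pn by simp
  have "cmean M (\<lambda>\<omega>. Y \<omega> * of_bool (X \<omega>)) (evt M (\<lambda>\<omega>. N \<omega> = n)) = nbhd_X M X N n * grp_Y M X Y N True n"
    using F(4) Mfacts(5)[OF st, where m=n and x=True] g1 pn unfolding cmean_def grp_prob_def nbhd_prob_def by simp
  then show "nbhd_cov M X Y N n = nbhd_X M X N n * (grp_Y M X Y N True n - nbhd_Y M Y N n)"
    unfolding nbhd_cov_def by (simp add: algebra_simps)
qed

lemma sharp:
  fixes M :: "'a measure" and X :: "'a \<Rightarrow> bool" and Y :: "'a \<Rightarrow> real" and N :: "'a \<Rightarrow> 'n::finite"
  assumes st: "standing M X Y N lo hi"
    and pn: "nbhd_prob M N n > 0"
    and xn: "0 < nbhd_X M X N n" "nbhd_X M X N n < 1"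
    and ab: "lo \<le> a" "a \<le> hi" "lo \<le> b" "b \<le> hi"
    and ey: "nbhd_X M X N n * a + (1 - nbhd_X M X N n) * b = nbhd_Y M Y N n"
  shows "\<exists>q. standing (measure_pmf q) pX pY pN lo hi \<and> same_observed q M X Y N
     \<and> grp_Y (measure_pmf q) pX pY pN True n = a \<and> grp_Y (measure_pmf q) pX pY pN False n = b
     \<and> nbhd_cov (measure_pmf q) pX pY pN n = nbhd_X M X N n * (1 - nbhd_X M X N n) * (a - b)
     \<and> nbhd_D (measure_pmf q) pX pY pN n = a - b"
proof -
  note D = decomp[OF st pn xn]
  define val where "val = (\<lambda>x m. if m = n then (if x then a else b) else grp_Y M X Y N x m)"
  have vb: "lo \<le> val x m \<and> val x m \<le> hi" if "grp_prob M X N x m > 0" for x m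
    using st that ab unfolding val_def standing_def by auto
  have vs: "grp_prob M X N True m * val True m + grp_prob M X N False m * val False m
               = (\<integral>\<omega>. indicator (evt M (\<lambda>\<omega>. N \<omega> = m)) \<omega> * Y \<omega> \<partial>M)" for m
  proof (cases "m = n")
    case True
    have "nbhd_prob M N n * nbhd_Y M Y N n = nbhd_prob M N n * (nbhd_X M X N n * a + (1 - nbhd_X M X N n) * b)"
      using ey by simp
    then show ?thesis unfolding True val_def D(1,2,9) by (simp add: algebra_simps)
  next
    case False
    then show ?thesis using Mfacts(3)[OF st, where m=m] Mfacts(5)[OF st, where m=m and x=True] Mfacts(5)[OF st, where m=m and x=False]
      unfolding val_def grp_prob_def by simp
  qed
  obtain q where q: "standing (measure_pmf q) pX pY pN lo hi" "same_observed q M X Y N"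
     "\<forall>x m. grp_prob M X N x m > 0 \<longrightarrow> grp_Y (measure_pmf q) pX pY pN x m = val x m"
     "\<forall>m. cmean (measure_pmf q) (\<lambda>\<omega>. pY \<omega> * of_bool (pX \<omega>)) (evt (measure_pmf q) (\<lambda>\<omega>. pN \<omega> = m))
            = grp_prob M X N True m * val True m / nbhd_prob M N m"
    using construct[OF st vb vs] by blast
  have p1: "grp_prob M X N True n > 0" using D(1) pn xn by simp
  have p0: "grp_prob M X N False n > 0" using D(2) pn xn by simp
  have ga: "grp_Y (measure_pmf q) pX pY pN True n = a" using q(3) p1 unfolding val_def by simp
  have gb: "grp_Y (measure_pmf q) pX pY pN False n = b" using q(3) p0 unfolding val_def by simp
  have so: "nbhd_X (measure_pmf q) pX pN n = nbhd_X M X N n" "nbhd_Y (measure_pmf q) pY pN n = nbhd_Y M Y N n"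
    using q(2) unfolding same_observed_def by auto
  have "nbhd_cov (measure_pmf q) pX pY pN n = nbhd_X M X N n * a - nbhd_Y M Y N n * nbhd_X M X N n"
    unfolding nbhd_cov_def so using q(4) D(1) pn unfolding val_def by simp
  also have "\<dots> = nbhd_X M X N n * (1 - nbhd_X M X N n) * (a - b)"
    unfolding ey[symmetric] by (simp add: algebra_simps)
  finally show ?thesis using q(1,2) ga gb unfolding nbhd_D_def by blast
qed



lemma mob_plus:
  fixes x y Y1 Y0 lo hi :: real
  assumes x: "0 < x" "x < 1" and b: "lo \<le> Y1" "Y1 \<le> hi" "lo \<le> Y0" "Y0 \<le> hi"
    and y: "y = x * Y1 + (1 - x) * Y0"
  defines "u \<equiv> Y1plus_MOB lo hi x y" and "l \<equiv> Y0minus_MOB lo hi x y"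
  shows "x * u + (1 - x) * l = y" "lo \<le> l" "l \<le> y" "y \<le> u" "u \<le> hi"
    and "Y0 \<le> Y1 \<Longrightarrow> Y1 \<le> u \<and> l \<le> Y0"
proof -
  have x1: "0 < 1 - x" using x by simp
  have ylo: "lo \<le> y" and yhi: "y \<le> hi"
  proof -
    have "x * lo + (1-x) * lo \<le> y" unfolding y using x1 x b by (intro add_mono mult_left_mono) auto
    then show "lo \<le> y" by (simp add: algebra_simps)
    have "y \<le> x * hi + (1-x) * hi" unfolding y using x1 x b by (intro add_mono mult_left_mono) auto
    then show "y \<le> hi" by (simp add: algebra_simps)
  qed
  define U where "U = (y - lo * (1 - x)) / x"
  define L where "L = (y - hi * x) / (1 - x)"
  have U: "x * U = y - lo * (1 - x)" unfolding U_def using x by simp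
  have L: "(1 - x) * L = y - hi * x" unfolding L_def using x1 by simp
  have uu: "u = min U hi" unfolding u_def Y1plus_MOB_def U_def ..
  have ll: "l = max L lo" unfolding l_def Y0minus_MOB_def L_def ..
  have c1: "U \<le> hi \<longleftrightarrow> L \<le> lo"
  proof -
    have "U \<le> hi \<longleftrightarrow> x * U \<le> x * hi" using x by simp
    also have "\<dots> \<longleftrightarrow> (1 - x) * L \<le> (1 - x) * lo" unfolding U L by (simp add: algebra_simps)
    also have "\<dots> \<longleftrightarrow> L \<le> lo" using x1 by simp
    finally show ?thesis .
  qed
  show "x * u + (1 - x) * l = y"
  proof (cases "U \<le> hi")
    case True
    then have "u = U" "l = lo" using c1 uu ll by auto
    then show ?thesis using U by (simp add: algebra_simps)
  next
    case False
    then have "u = hi" "l = L" using c1 uu ll by auto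
    then show ?thesis using L by (simp add: algebra_simps)
  qed
  show "lo \<le> l" unfolding ll by simp
  show "u \<le> hi" unfolding uu by simp
  have h1: "(1-x)*lo \<le> (1-x)*y" using x1 ylo by (intro mult_left_mono) auto
  have "x * y \<le> x * U" unfolding U using h1 by (simp add: algebra_simps)
  then have "y \<le> U" using x by simp
  then show "y \<le> u" unfolding uu using yhi by simp
  have h2: "x*y \<le> x*hi" using x yhi by (intro mult_left_mono) auto
  have "(1 - x) * L \<le> (1 - x) * y" unfolding L using h2 by (simp add: algebra_simps)
  then have "L \<le> y" using x1 by simp
  then show "l \<le> y" unfolding ll using ylo by simp
  assume le: "Y0 \<le> Y1"
  have h3: "(1-x)*lo \<le> (1-x)*Y0" using x1 b by (intro mult_left_mono) auto
  have "x * Y1 \<le> x * U" unfolding U y using h3 by (simp add: algebra_simps)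
  then have "Y1 \<le> U" using x by simp
  moreover have h4: "x*Y1 \<le> x*hi" using x b by (intro mult_left_mono) auto
  have "(1 - x) * L \<le> (1 - x) * Y0" unfolding L y using h4 by (simp add: algebra_simps)
  then have "L \<le> Y0" using x1 by simp
  ultimately show "Y1 \<le> u \<and> l \<le> Y0" unfolding uu ll using b by simp
qed

lemma neg1: "Y1plus_MOB (-hi) (-lo) x (-y) = - Y1minus_MOB lo hi x y"
proof -
  have "(-y - (-hi) * (1 - x)) / x = - ((y - hi * (1 - x)) / x)" unfolding minus_divide_left by (rule arg_cong[where f="\<lambda>t. t / x"]) simp
  then show ?thesis unfolding Y1plus_MOB_def Y1minus_MOB_def by (simp add: min_def max_def)
qed

lemma neg0: "Y0minus_MOB (-hi) (-lo) x (-y) = - Y0plus_MOB lo hi x y"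
proof -
  have "(-y - (-lo) * x) / (1 - x) = - ((y - lo * x) / (1 - x))" unfolding minus_divide_left by (rule arg_cong[where f="\<lambda>t. t / (1 - x)"]) simp
  then show ?thesis unfolding Y0minus_MOB_def Y0plus_MOB_def by (simp add: min_def max_def)
qed

lemma mob_minus:
  fixes x y Y1 Y0 lo hi :: real
  assumes x: "0 < x" "x < 1" and b: "lo \<le> Y1" "Y1 \<le> hi" "lo \<le> Y0" "Y0 \<le> hi"
    and y: "y = x * Y1 + (1 - x) * Y0"
  defines "u \<equiv> Y1minus_MOB lo hi x y" and "l \<equiv> Y0plus_MOB lo hi x y"
  shows "x * u + (1 - x) * l = y" "l \<le> hi" "y \<le> l" "u \<le> y" "lo \<le> u"
    and "Y1 \<le> Y0 \<Longrightarrow> u \<le> Y1 \<and> Y0 \<le> l"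
proof -
  have y': "-y = x * (-Y1) + (1 - x) * (-Y0)" using y by simp
  note P = mob_plus[OF x _ _ _ _ y', of "-hi" "-lo", unfolded neg1 neg0, folded u_def l_def]
  have b': "-hi \<le> -Y1" "-Y1 \<le> -lo" "-hi \<le> -Y0" "-Y0 \<le> -lo" using b by auto
  note P' = P[OF b']
  show "x * u + (1 - x) * l = y" using P'(1) by (simp add: algebra_simps)
  show "l \<le> hi" "y \<le> l" "u \<le> y" "lo \<le> u" using P'(2-5) by auto
  assume "Y1 \<le> Y0" then show "u \<le> Y1 \<and> Y0 \<le> l" using P'(6) by auto
qed

lemma wit:
  fixes x y A B d lo hi :: real
  assumes x: "0 < x" "x < 1" and b: "lo \<le> A" "A \<le> hi" "lo \<le> B" "B \<le> hi"
    and y: "x * A + (1 - x) * B = y"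
    and d: "(0 \<le> d \<and> d \<le> A - B) \<or> (A - B \<le> d \<and> d \<le> 0)"
  shows "lo \<le> y + (1 - x) * d" "y + (1 - x) * d \<le> hi" "lo \<le> y - x * d" "y - x * d \<le> hi"
    "x * (y + (1 - x) * d) + (1 - x) * (y - x * d) = y"
proof -
  have x1: "0 < 1 - x" using x by simp
  have eA: "A - (y + (1 - x) * d) = (1 - x) * (A - B - d)" using y by (simp add: algebra_simps)
  have eB: "(y - x * d) - B = x * (A - B - d)" using y by (simp add: algebra_simps)
  have ylo: "lo \<le> y" and yhi: "y \<le> hi"
  proof -
    have "x * lo + (1-x) * lo \<le> y" unfolding y[symmetric] using x1 x b by (intro add_mono mult_left_mono) auto
    then show "lo \<le> y" by (simp add: algebra_simps)
    have "y \<le> x * hi + (1-x) * hi" unfolding y[symmetric] using x1 x b by (intro add_mono mult_left_mono) auto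
    then show "y \<le> hi" by (simp add: algebra_simps)
  qed
  show "x * (y + (1 - x) * d) + (1 - x) * (y - x * d) = y" by (simp add: algebra_simps)
  have "lo \<le> y + (1 - x) * d \<and> y + (1 - x) * d \<le> hi \<and> lo \<le> y - x * d \<and> y - x * d \<le> hi"
    using d
  proof (elim disjE conjE)
    assume d1: "0 \<le> d" "d \<le> A - B"
    have p1: "0 \<le> (1 - x) * d" "0 \<le> x * d" using d1 x1 x by auto
    have p2: "0 \<le> (1 - x) * (A - B - d)" "0 \<le> x * (A - B - d)" using d1 x1 x by auto
    show ?thesis
      using p1 p2 eA eB ylo yhi b by argo
  next
    assume d1: "A - B \<le> d" "d \<le> 0"
    have p1: "(1 - x) * d \<le> 0" "x * d \<le> 0" using d1 x1 x by (auto simp: mult_nonneg_nonpos)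
    have p2: "(1 - x) * (A - B - d) \<le> 0" "x * (A - B - d) \<le> 0" using d1 x1 x by (auto simp: mult_nonneg_nonpos)
    show ?thesis
      using p1 p2 eA eB ylo yhi b by argo
  qed
  then show "lo \<le> y + (1 - x) * d" "y + (1 - x) * d \<le> hi" "lo \<le> y - x * d" "y - x * d \<le> hi" by auto
qed



lemma realize:
  fixes M :: "'a measure" and X :: "'a \<Rightarrow> bool" and Y :: "'a \<Rightarrow> real" and N :: "'a \<Rightarrow> 'n::finite"
  assumes st: "standing M X Y N lo hi"
    and pn: "nbhd_prob M N n > 0"
    and xn: "0 < nbhd_X M X N n" "nbhd_X M X N n < 1"
    and b: "lo \<le> A" "A \<le> hi" "lo \<le> B" "B \<le> hi"
    and y: "nbhd_X M X N n * A + (1 - nbhd_X M X N n) * B = nbhd_Y M Y N n"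
    and d: "(0 \<le> d \<and> d \<le> A - B) \<or> (A - B \<le> d \<and> d \<le> 0)"
  shows "\<exists>q. standing (measure_pmf q) pX pY pN lo hi \<and> same_observed q M X Y N
     \<and> grp_Y (measure_pmf q) pX pY pN True n = nbhd_Y M Y N n + (1 - nbhd_X M X N n) * d
     \<and> grp_Y (measure_pmf q) pX pY pN False n = nbhd_Y M Y N n - nbhd_X M X N n * d
     \<and> nbhd_cov (measure_pmf q) pX pY pN n = nbhd_X M X N n * (1 - nbhd_X M X N n) * d
     \<and> nbhd_D (measure_pmf q) pX pY pN n = d"
proof -
  note W = wit[OF xn b y d]
  have e: "(nbhd_Y M Y N n + (1 - nbhd_X M X N n) * d) - (nbhd_Y M Y N n - nbhd_X M X N n * d) = d"
    by (simp add: algebra_simps)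
  show ?thesis using sharp[OF st pn xn W(1-5)] unfolding e by blast
qed

theorem proposition11:
  fixes M :: "'a measure" and X :: "'a \<Rightarrow> bool" and Y :: "'a \<Rightarrow> real"
    and N :: "'a \<Rightarrow> 'n::finite" and lo hi :: real and n :: 'n
  assumes st: "standing M X Y N lo hi"
    and pn: "nbhd_prob M N n > 0"
    and xn: "0 < nbhd_X M X N n" "nbhd_X M X N n < 1"
  defines "xb \<equiv> nbhd_X M X N n" and "yb \<equiv> nbhd_Y M Y N n"
  shows
    "(nbhd_cov M X Y N n \<ge> 0 \<longrightarrow>
        nbhd_D M X Y N n \<in> {0 .. Dplus_MOB lo hi xb yb} \<and>
        grp_Y M X Y N True n \<in> {yb .. Y1plus_MOB lo hi xb yb} \<and>
        grp_Y M X Y N False n \<in> {Y0minus_MOB lo hi xb yb .. yb})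
   \<and> (nbhd_cov M X Y N n \<le> 0 \<longrightarrow>
        nbhd_D M X Y N n \<in> {Dminus_MOB lo hi xb yb .. 0} \<and>
        grp_Y M X Y N True n \<in> {Y1minus_MOB lo hi xb yb .. yb} \<and>
        grp_Y M X Y N False n \<in> {yb .. Y0plus_MOB lo hi xb yb})
   \<and> (nbhd_cov M X Y N n \<ge> 0 \<longrightarrow>
        (\<forall>d \<in> {0 .. Dplus_MOB lo hi xb yb}. \<exists>q.
            standing (measure_pmf q) pX pY pN lo hi \<and> same_observed q M X Y N \<and>
            nbhd_cov (measure_pmf q) pX pY pN n \<ge> 0 \<and> nbhd_D (measure_pmf q) pX pY pN n = d) \<and>
        (\<forall>v \<in> {yb .. Y1plus_MOB lo hi xb yb}. \<exists>q.
            standing (measure_pmf q) pX pY pN lo hi \<and> same_observed q M X Y N \<and>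
            nbhd_cov (measure_pmf q) pX pY pN n \<ge> 0 \<and> grp_Y (measure_pmf q) pX pY pN True n = v) \<and>
        (\<forall>v \<in> {Y0minus_MOB lo hi xb yb .. yb}. \<exists>q.
            standing (measure_pmf q) pX pY pN lo hi \<and> same_observed q M X Y N \<and>
            nbhd_cov (measure_pmf q) pX pY pN n \<ge> 0 \<and> grp_Y (measure_pmf q) pX pY pN False n = v))
   \<and> (nbhd_cov M X Y N n \<le> 0 \<longrightarrow>
        (\<forall>d \<in> {Dminus_MOB lo hi xb yb .. 0}. \<exists>q.
            standing (measure_pmf q) pX pY pN lo hi \<and> same_observed q M X Y N \<and>
            nbhd_cov (measure_pmf q) pX pY pN n \<le> 0 \<and> nbhd_D (measure_pmf q) pX pY pN n = d) \<and>
        (\<forall>v \<in> {Y1minus_MOB lo hi xb yb .. yb}. \<exists>q.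
            standing (measure_pmf q) pX pY pN lo hi \<and> same_observed q M X Y N \<and>
            nbhd_cov (measure_pmf q) pX pY pN n \<le> 0 \<and> grp_Y (measure_pmf q) pX pY pN True n = v) \<and>
        (\<forall>v \<in> {yb .. Y0plus_MOB lo hi xb yb}. \<exists>q.
            standing (measure_pmf q) pX pY pN lo hi \<and> same_observed q M X Y N \<and>
            nbhd_cov (measure_pmf q) pX pY pN n \<le> 0 \<and> grp_Y (measure_pmf q) pX pY pN False n = v))"
proof -
  note D = decomp[OF st pn xn]
  define Y1 where "Y1 = grp_Y M X Y N True n"
  define Y0 where "Y0 = grp_Y M X Y N False n"
  have x: "0 < xb" "xb < 1" using xn unfolding xb_def by auto
  have x1: "0 < 1 - xb" using x by simp
  have bb: "lo \<le> Y1" "Y1 \<le> hi" "lo \<le> Y0" "Y0 \<le> hi" using D(3-6) unfolding Y1_def Y0_def by auto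
  have y: "yb = xb * Y1 + (1 - xb) * Y0" using D(7) unfolding yb_def xb_def Y1_def Y0_def .
  have cov: "nbhd_cov M X Y N n = xb * (1 - xb) * (Y1 - Y0)"
    using D(8) unfolding xb_def[symmetric] yb_def[symmetric] Y1_def[symmetric] y by (simp add: algebra_simps)
  have DD: "nbhd_D M X Y N n = Y1 - Y0" unfolding nbhd_D_def Y1_def Y0_def ..
  have e1: "Y1 - yb = (1 - xb) * (Y1 - Y0)" and e0: "yb - Y0 = xb * (Y1 - Y0)"
    unfolding y by (simp_all add: algebra_simps)
  have xx: "0 < xb * (1 - xb)" using x x1 by simp
  have sge: "nbhd_cov M X Y N n \<ge> 0 \<longleftrightarrow> Y0 \<le> Y1"
  proof -
    have "\<And>c t::real. 0 < c \<Longrightarrow> 0 \<le> c * t \<longleftrightarrow> 0 \<le> t" by (simp add: zero_le_mult_iff)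
    from this[OF xx, of "Y1 - Y0"] show ?thesis unfolding cov by simp
  qed
  have sle: "nbhd_cov M X Y N n \<le> 0 \<longleftrightarrow> Y1 \<le> Y0"
  proof -
    have "\<And>c t::real. 0 < c \<Longrightarrow> c * t \<le> 0 \<longleftrightarrow> t \<le> 0" by (simp add: mult_le_0_iff)
    from this[OF xx, of "Y1 - Y0"] show ?thesis unfolding cov by simp
  qed
  note P = mob_plus[OF x bb y]
  note Q = mob_minus[OF x bb y]
  have xy: "xb * Y1plus_MOB lo hi xb yb + (1 - xb) * Y0minus_MOB lo hi xb yb = yb" using P(1) .
  have xy': "xb * Y1minus_MOB lo hi xb yb + (1 - xb) * Y0plus_MOB lo hi xb yb = yb" using Q(1) .
  have eu: "Y1plus_MOB lo hi xb yb - yb = (1 - xb) * Dplus_MOB lo hi xb yb"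
   and el: "yb - Y0minus_MOB lo hi xb yb = xb * Dplus_MOB lo hi xb yb"
    using xy unfolding Dplus_MOB_def by (simp_all add: algebra_simps)
  have eu': "Y1minus_MOB lo hi xb yb - yb = (1 - xb) * Dminus_MOB lo hi xb yb"
   and el': "yb - Y0plus_MOB lo hi xb yb = xb * Dminus_MOB lo hi xb yb"
    using xy' unfolding Dminus_MOB_def by (simp_all add: algebra_simps)
  have Pb: "lo \<le> Y1plus_MOB lo hi xb yb" "Y1plus_MOB lo hi xb yb \<le> hi"
     "lo \<le> Y0minus_MOB lo hi xb yb" "Y0minus_MOB lo hi xb yb \<le> hi" using P(2-5) by linarith+
  have Qb: "lo \<le> Y1minus_MOB lo hi xb yb" "Y1minus_MOB lo hi xb yb \<le> hi"
     "lo \<le> Y0plus_MOB lo hi xb yb" "Y0plus_MOB lo hi xb yb \<le> hi" using Q(2-5) by linarith+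
  note R = realize[OF st pn xn, folded xb_def yb_def]
  show ?thesis
  proof (intro conjI impI ballI)
    assume c: "nbhd_cov M X Y N n \<ge> 0"
    then have le: "Y0 \<le> Y1" using sge by simp
    have p: "0 \<le> (1 - xb) * (Y1 - Y0)" "0 \<le> xb * (Y1 - Y0)" using le x x1 by auto
    show "nbhd_D M X Y N n \<in> {0 .. Dplus_MOB lo hi xb yb}"
      unfolding DD Dplus_MOB_def using le P(6) by auto
    show "grp_Y M X Y N True n \<in> {yb .. Y1plus_MOB lo hi xb yb}"
      unfolding Y1_def[symmetric] using le P(6) e1 p by auto
    show "grp_Y M X Y N False n \<in> {Y0minus_MOB lo hi xb yb .. yb}"
      unfolding Y0_def[symmetric] using le P(6) e0 p by auto
  next
    assume c: "nbhd_cov M X Y N n \<le> 0"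
    then have le: "Y1 \<le> Y0" using sle by simp
    have p: "(1 - xb) * (Y1 - Y0) \<le> 0" "xb * (Y1 - Y0) \<le> 0" using le x x1 by (auto simp: mult_nonneg_nonpos)
    show "nbhd_D M X Y N n \<in> {Dminus_MOB lo hi xb yb .. 0}"
      unfolding DD Dminus_MOB_def using le Q(6) by auto
    show "grp_Y M X Y N True n \<in> {Y1minus_MOB lo hi xb yb .. yb}"
      unfolding Y1_def[symmetric] using le Q(6) e1 p by auto
    show "grp_Y M X Y N False n \<in> {yb .. Y0plus_MOB lo hi xb yb}"
      unfolding Y0_def[symmetric] using le Q(6) e0 p by auto
  next
    fix d assume "d \<in> {0 .. Dplus_MOB lo hi xb yb}"
    then have "(0 \<le> d \<and> d \<le> Y1plus_MOB lo hi xb yb - Y0minus_MOB lo hi xb yb)" unfolding Dplus_MOB_def by auto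
    then obtain q where q: "standing (measure_pmf q) pX pY pN lo hi" "same_observed q M X Y N"
      "nbhd_cov (measure_pmf q) pX pY pN n = xb * (1 - xb) * d" "nbhd_D (measure_pmf q) pX pY pN n = d"
      using R[OF Pb xy] by blast
    have "0 \<le> xb * (1 - xb) * d" using xx \<open>0 \<le> d \<and> _\<close> by simp
    then show "\<exists>q. standing (measure_pmf q) pX pY pN lo hi \<and> same_observed q M X Y N \<and>
            nbhd_cov (measure_pmf q) pX pY pN n \<ge> 0 \<and> nbhd_D (measure_pmf q) pX pY pN n = d"
      using q by auto
  next
    fix v assume v: "v \<in> {yb .. Y1plus_MOB lo hi xb yb}"
    define d where "d = (v - yb) / (1 - xb)"
    have vd: "v = yb + (1 - xb) * d" unfolding d_def using x1 by simp
    have "0 \<le> d \<and> d \<le> Y1plus_MOB lo hi xb yb - Y0minus_MOB lo hi xb yb"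
    proof
      show "0 \<le> d" unfolding d_def using v x1 by simp
      have "(1 - xb) * d \<le> (1 - xb) * Dplus_MOB lo hi xb yb" using vd v eu by simp
      then show "d \<le> Y1plus_MOB lo hi xb yb - Y0minus_MOB lo hi xb yb" using x1 unfolding Dplus_MOB_def by simp
    qed
    then obtain q where q: "standing (measure_pmf q) pX pY pN lo hi" "same_observed q M X Y N"
      "grp_Y (measure_pmf q) pX pY pN True n = v"
      "nbhd_cov (measure_pmf q) pX pY pN n = xb * (1 - xb) * d"
      using R[OF Pb xy] vd by blast
    have "0 \<le> xb * (1 - xb) * d" using xx \<open>0 \<le> d \<and> _\<close> by simp
    then show "\<exists>q. standing (measure_pmf q) pX pY pN lo hi \<and> same_observed q M X Y N \<and>
            nbhd_cov (measure_pmf q) pX pY pN n \<ge> 0 \<and> grp_Y (measure_pmf q) pX pY pN True n = v"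
      using q by auto
  next
    fix v assume v: "v \<in> {Y0minus_MOB lo hi xb yb .. yb}"
    define d where "d = (yb - v) / xb"
    have vd: "v = yb - xb * d" unfolding d_def using x by simp
    have "0 \<le> d \<and> d \<le> Y1plus_MOB lo hi xb yb - Y0minus_MOB lo hi xb yb"
    proof
      show "0 \<le> d" unfolding d_def using v x by simp
      have "xb * d \<le> xb * Dplus_MOB lo hi xb yb" using vd v el by simp
      then show "d \<le> Y1plus_MOB lo hi xb yb - Y0minus_MOB lo hi xb yb" using x unfolding Dplus_MOB_def by simp
    qed
    then obtain q where q: "standing (measure_pmf q) pX pY pN lo hi" "same_observed q M X Y N"
      "grp_Y (measure_pmf q) pX pY pN False n = v"
      "nbhd_cov (measure_pmf q) pX pY pN n = xb * (1 - xb) * d"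
      using R[OF Pb xy] vd by blast
    have "0 \<le> xb * (1 - xb) * d" using xx \<open>0 \<le> d \<and> _\<close> by simp
    then show "\<exists>q. standing (measure_pmf q) pX pY pN lo hi \<and> same_observed q M X Y N \<and>
            nbhd_cov (measure_pmf q) pX pY pN n \<ge> 0 \<and> grp_Y (measure_pmf q) pX pY pN False n = v"
      using q by auto
  next
    fix d assume "d \<in> {Dminus_MOB lo hi xb yb .. 0}"
    then have "(Y1minus_MOB lo hi xb yb - Y0plus_MOB lo hi xb yb \<le> d \<and> d \<le> 0)" unfolding Dminus_MOB_def by auto
    then obtain q where q: "standing (measure_pmf q) pX pY pN lo hi" "same_observed q M X Y N"
      "nbhd_cov (measure_pmf q) pX pY pN n = xb * (1 - xb) * d" "nbhd_D (measure_pmf q) pX pY pN n = d"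
      using R[OF Qb xy'] by blast
    have "xb * (1 - xb) * d \<le> 0" using xx \<open>_ \<and> d \<le> 0\<close> by (simp add: mult_nonneg_nonpos)
    then show "\<exists>q. standing (measure_pmf q) pX pY pN lo hi \<and> same_observed q M X Y N \<and>
            nbhd_cov (measure_pmf q) pX pY pN n \<le> 0 \<and> nbhd_D (measure_pmf q) pX pY pN n = d"
      using q by auto
  next
    fix v assume v: "v \<in> {Y1minus_MOB lo hi xb yb .. yb}"
    define d where "d = (v - yb) / (1 - xb)"
    have vd: "v = yb + (1 - xb) * d" unfolding d_def using x1 by simp
    have "Y1minus_MOB lo hi xb yb - Y0plus_MOB lo hi xb yb \<le> d \<and> d \<le> 0"
    proof
      show "d \<le> 0" unfolding d_def using v x1 by (simp add: divide_nonpos_pos)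
      have "(1 - xb) * Dminus_MOB lo hi xb yb \<le> (1 - xb) * d" using vd v eu' by simp
      then show "Y1minus_MOB lo hi xb yb - Y0plus_MOB lo hi xb yb \<le> d" using x1 unfolding Dminus_MOB_def by simp
    qed
    then obtain q where q: "standing (measure_pmf q) pX pY pN lo hi" "same_observed q M X Y N"
      "grp_Y (measure_pmf q) pX pY pN True n = v"
      "nbhd_cov (measure_pmf q) pX pY pN n = xb * (1 - xb) * d"
      using R[OF Qb xy'] vd by blast
    have "xb * (1 - xb) * d \<le> 0" using xx \<open>_ \<and> d \<le> 0\<close> by (simp add: mult_nonneg_nonpos)
    then show "\<exists>q. standing (measure_pmf q) pX pY pN lo hi \<and> same_observed q M X Y N \<and>
            nbhd_cov (measure_pmf q) pX pY pN n \<le> 0 \<and> grp_Y (measure_pmf q) pX pY pN True n = v"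
      using q by auto
  next
    fix v assume v: "v \<in> {yb .. Y0plus_MOB lo hi xb yb}"
    define d where "d = (yb - v) / xb"
    have vd: "v = yb - xb * d" unfolding d_def using x by simp
    have "Y1minus_MOB lo hi xb yb - Y0plus_MOB lo hi xb yb \<le> d \<and> d \<le> 0"
    proof
      show "d \<le> 0" unfolding d_def using v x by (simp add: divide_nonpos_pos)
      have "xb * Dminus_MOB lo hi xb yb \<le> xb * d" using vd v el' by simp
      then show "Y1minus_MOB lo hi xb yb - Y0plus_MOB lo hi xb yb \<le> d" using x unfolding Dminus_MOB_def by simp
    qed
    then obtain q where q: "standing (measure_pmf q) pX pY pN lo hi" "same_observed q M X Y N"
      "grp_Y (measure_pmf q) pX pY pN False n = v"
      "nbhd_cov (measure_pmf q) pX pY pN n = xb * (1 - xb) * d"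
      using R[OF Qb xy'] vd by blast
    have "xb * (1 - xb) * d \<le> 0" using xx \<open>_ \<and> d \<le> 0\<close> by (simp add: mult_nonneg_nonpos)
    then show "\<exists>q. standing (measure_pmf q) pX pY pN lo hi \<and> same_observed q M X Y N \<and>
            nbhd_cov (measure_pmf q) pX pY pN n \<le> 0 \<and> grp_Y (measure_pmf q) pX pY pN False n = v"
      using q by auto
  qed
qed


end
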